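(* Let $\tilde\rho:\mathbb Z_{(2)}[[x,y,z]]\to\mathbb Z_{(2)}[[t]]$ be the ring morphism with $\tilde\rho(x)=t^6+t^{31}$, $\tilde\rho(y)=t^8$, $\tilde\rho(z)=t^{10}$ and $\tilde P=\ker\tilde\rho$. Then $\varphi=z^2+x^2y+y^5z^3\notin \tilde P+2\,\mathbb Z_{(2)}[[x,y,z]]$. Consequently, the kernel $\overline P$ of the analogous morphism $(\mathbb Z/2\mathbb Z)[[x,y,z]]\to(\mathbb Z/2\mathbb Z)[[t]]$ is not contained in the image of $\tilde P$ in $(\mathbb Z/2\mathbb Z)[[x,y,z]]$.
   Context: $\mathbb Z_{(2)}$ denotes the localization of $\mathbb Z$ at the prime ideal $(2)$. The morphism $(\mathbb Z/2\mathbb Z)[[x,y,z]]\to(\mathbb Z/2\mathbb Z)[[t]]$ sends $x\mapsto t^6+t^{31}$, $y\mapsto t^8$, $z\mapsto t^{10}$. *)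

theory Defs
  imports "HOL-Computational_Algebra.Formal_Power_Series" "HOL-Library.Z2"
begin

text \<open>Formal power series in three variables x, y, z over a ring 'a, represented by
  their coefficient functions: f a b c is the coefficient of x^a y^b z^c.\<close>
type_synonym 'a fps3 = "nat \<Rightarrow> nat \<Rightarrow> nat \<Rightarrow> 'a"

definition Zloc2 :: "rat set" where
  "Zloc2 = {q. \<exists>a b :: int. odd b \<and> q = of_int a / of_int b}"

definition Zloc2_fps3 :: "rat fps3 set" where
  "Zloc2_fps3 = {f. \<forall>a b c. f a b c \<in> Zloc2}"

definition mono3 :: "nat \<Rightarrow> nat \<Rightarrow> nat \<Rightarrow> 'a::zero_neq_one fps3" where
  "mono3 i j k = (\<lambda>a b c. if a = i \<and> b = j \<and> c = k then 1 else 0)"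

text \<open>Monomials x^a y^b z^c with 6a+8b+10c > n do not contribute to the coefficient of t^n,
  so the sum below is the (finite) coefficient of t^n of the substituted series.\<close>
definition rho :: "'a::comm_ring_1 fps3 \<Rightarrow> 'a fps" where
  "rho f = Abs_fps (\<lambda>n. \<Sum>a\<le>n. \<Sum>b\<le>n. \<Sum>c\<le>n.
      f a b c * fps_nth ((fps_X ^ 6 + fps_X ^ 31) ^ a * fps_X ^ (8 * b + 10 * c)) n)"

definition phi :: "'a::comm_ring_1 fps3" where
  "phi = (\<lambda>a b c. mono3 0 0 2 a b c + mono3 2 1 0 a b c + mono3 0 5 3 a b c)"

text \<open>Reduction Z_(2) \<rightarrow> Z/2Z (for q = n/d in lowest terms with d odd, q \<mapsto> n/d mod 2).\<close>
definition red2 :: "rat \<Rightarrow> bit" where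
  "red2 q = of_int (fst (quotient_of q)) / of_int (snd (quotient_of q))"

end

theory Submission
  imports Defs
begin

lemma G_nth:
  "fps_nth ((fps_X ^ 6 + fps_X ^ 31) ^ a * fps_X ^ m :: 'a::comm_ring_1 fps) n =
   (\<Sum>k\<le>a. of_nat (a choose k) * (if n = 6*a+25*k+m then 1 else 0))"
proof -
  have "(fps_X ^ 6 + fps_X ^ 31) ^ a * fps_X ^ m =
        (\<Sum>k\<le>a. fps_const (of_nat (a choose k)) * fps_X ^ (6*a+25*k+m) :: 'a fps)"
  proof -
    have "(fps_X ^ 6 + fps_X ^ 31) ^ a = ((fps_X ^ 31 + fps_X ^ 6) ^ a :: 'a fps)" by (simp add: add.commute)
    also have "\<dots> = (\<Sum>k\<le>a. of_nat (a choose k) * (fps_X ^ 31) ^ k * (fps_X ^ 6) ^ (a - k))"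
      by (rule binomial_ring)
    finally have "(fps_X ^ 6 + fps_X ^ 31) ^ a * fps_X ^ m = (\<Sum>k\<le>a. of_nat (a choose k) * (fps_X ^ 31) ^ k * (fps_X ^ 6) ^ (a - k) * (fps_X ^ m :: 'a fps))"
      by (simp add: sum_distrib_right)
    also have "\<dots> = (\<Sum>k\<le>a. fps_const (of_nat (a choose k)) * fps_X ^ (6*a+25*k+m))"
    proof (rule sum.cong[OF refl])
      fix k assume "k \<in> {..a}"
      then have "31*k + 6*(a-k) + m = 6*a+25*k+m" by auto
      then have eq: "fps_X ^ (31*k + 6*(a-k) + m) = (fps_X ^ (6*a+25*k+m) :: 'a fps)" by metis
      have X: "of_nat (a choose k) * (fps_X ^ 31) ^ k * (fps_X ^ 6) ^ (a - k) * (fps_X ^ m :: 'a fps) = fps_const (of_nat (a choose k)) * fps_X ^ (31*k + 6*(a-k) + m)"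
        by (simp add: fps_of_nat power_mult[symmetric] power_add[symmetric] mult.assoc)
      show "of_nat (a choose k) * (fps_X ^ 31) ^ k * (fps_X ^ 6) ^ (a - k) * (fps_X ^ m :: 'a fps) = fps_const (of_nat (a choose k)) * fps_X ^ (6*a+25*k+m)"
        using X eq by metis
    qed
    finally show ?thesis .
  qed
  then show ?thesis by (simp add: fps_sum_nth)
qed

lemma rho_nth: "fps_nth (rho f) n = (\<Sum>a\<le>n. \<Sum>b\<le>n. \<Sum>c\<le>n. f a b c *
   (\<Sum>k\<le>a. of_nat (a choose k) * (if n = 6*a+25*k+(8*b+10*c) then 1 else 0)))"
  unfolding rho_def by (simp add: G_nth)

lemma arith45: "45 = 6*a+25*k+(8*b+10*c) \<Longrightarrow> k \<le> (a::nat) \<Longrightarrow> a = 2 \<and> b = 1 \<and> c = 0 \<and> k = 1"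
proof -
  assume h: "45 = 6*a+25*k+(8*b+10*c)" "k \<le> a"
  have "k \<le> 1" using h by linarith
  then consider "k = 0" | "k = 1" by linarith
  then show ?thesis
  proof cases
    case 1
    then have "45 = 2*(3*a+4*b+5*c)" using h by simp
    then show ?thesis by presburger
  next
    case 2
    then have e: "6*a+8*b+10*c = 20" "1 \<le> a" using h by auto
    have "a \<in> {1,2,3}" "b \<in> {0,1,2}" "c \<in> {0,1,2}" using e by auto
    then show ?thesis using e 2 by auto
  qed
qed

lemma inner45: "(\<Sum>k\<le>a. of_nat (a choose k) * (if (45::nat) = 6*a+25*k+(8*b+10*c) then 1 else 0) :: 'a::comm_ring_1)
   = (if a = 2 \<and> b = 1 \<and> c = 0 then 2 else 0)"
proof (cases "a = 2 \<and> b = 1 \<and> c = 0")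
  case True
  then show ?thesis by (simp add: numeral_2_eq_2)
next
  case False
  have "\<And>k. k \<in> {..a} \<Longrightarrow> of_nat (a choose k) * (if (45::nat) = 6*a+25*k+(8*b+10*c) then 1 else 0) = (0::'a)"
    using arith45 False by auto
  then have "(\<Sum>k\<le>a. of_nat (a choose k) * (if (45::nat) = 6*a+25*k+(8*b+10*c) then 1 else 0) :: 'a) = 0"
    by (intro sum.neutral) blast
  then show ?thesis unfolding if_not_P[OF False] .
qed

lemma sum_if_out: "(\<Sum>x\<in>A. if P then g x else 0) = (if P then (\<Sum>x\<in>A. g x) else (0::'a::comm_monoid_add))"
  by simp

lemma rho45: "fps_nth (rho f) 45 = 2 * (f 2 1 0 :: 'a::comm_ring_1)"
proof -
  have "fps_nth (rho f) 45 = (\<Sum>a\<le>45. \<Sum>b\<le>45. \<Sum>c\<le>45::nat.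
     (if (a::nat) = 2 then (if (b::nat) = 1 then (if c = 0 then f 2 1 0 * 2 else 0) else 0) else 0))"
    unfolding rho_nth inner45 by (intro sum.cong refl) auto
  also have "\<dots> = 2 * f 2 1 0" by (simp add: mult.commute sum_if_out sum.delta)
  finally show ?thesis .
qed

lemma mono3_if: "mono3 i j k a b c * x = (if a = i then if b = j then if c = k then x else 0 else 0 else (0::'a::comm_ring_1))"
  unfolding mono3_def by simp

lemma rho_phi_nth: "fps_nth (rho (phi :: 'a::comm_ring_1 fps3)) n =
   (if n = 20 then 2 else 0) + (if n = 45 then 2 else 0) + (if n = 70 then 2 else 0)"
proof -
  have "fps_nth (rho (phi :: 'a fps3)) n =
     (\<Sum>a\<le>n. \<Sum>b\<le>n. \<Sum>c\<le>n. mono3 0 0 2 a b c *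
       (\<Sum>k\<le>a. of_nat (a choose k) * (if n = 6*a+25*k+(8*b+10*c) then 1 else 0)))
   + (\<Sum>a\<le>n. \<Sum>b\<le>n. \<Sum>c\<le>n. mono3 2 1 0 a b c *
       (\<Sum>k\<le>a. of_nat (a choose k) * (if n = 6*a+25*k+(8*b+10*c) then 1 else 0)))
   + (\<Sum>a\<le>n. \<Sum>b\<le>n. \<Sum>c\<le>n. mono3 0 5 3 a b c *
       (\<Sum>k\<le>a. of_nat (a choose k) * (if n = 6*a+25*k+(8*b+10*c) then 1 else 0)))"
    unfolding rho_nth phi_def by (simp add: distrib_right sum.distrib)
  also have "\<dots> = (if n = 20 then 2 else 0) + (if n = 45 then 2 else 0) + (if n = 70 then 2 else 0)"
    unfolding mono3_if by (simp add: sum_if_out sum.delta numeral_2_eq_2)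
  finally show ?thesis .
qed

lemma half_not_Zloc2: "(1/2 :: rat) \<notin> Zloc2"
proof
  assume "(1/2 :: rat) \<in> Zloc2"
  then obtain x y :: int where "odd y" "(1/2::rat) = of_int x / of_int y" unfolding Zloc2_def by blast
  moreover then have "y \<noteq> 0" by auto
  ultimately have "of_int y = (2 * of_int x :: rat)" by (simp add: field_simps)
  then have "y = 2 * x" by (metis of_int_eq_iff of_int_mult of_int_numeral)
  with \<open>odd y\<close> show False by simp
qed

lemma phi210: "phi 2 1 0 = (1::'a::comm_ring_1)" unfolding phi_def mono3_def by simp

theorem mainTheorem8:
  shows "(phi :: rat fps3) \<notin>
           {(\<lambda>a b c. p a b c + 2 * h a b c) | p h.
              p \<in> Zloc2_fps3 \<and> rho p = 0 \<and> h \<in> Zloc2_fps3}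
       \<and> \<not> ({f :: bit fps3. rho f = 0} \<subseteq>
              {(\<lambda>a b c. red2 (p a b c)) | p. p \<in> Zloc2_fps3 \<and> rho p = 0})"
proof
  show "(phi :: rat fps3) \<notin>
           {(\<lambda>a b c. p a b c + 2 * h a b c) | p h.
              p \<in> Zloc2_fps3 \<and> rho p = 0 \<and> h \<in> Zloc2_fps3}"
  proof
    assume "(phi :: rat fps3) \<in> {(\<lambda>a b c. p a b c + 2 * h a b c) | p h.
              p \<in> Zloc2_fps3 \<and> rho p = 0 \<and> h \<in> Zloc2_fps3}"
    then obtain p h where ph: "phi = (\<lambda>a b c. p a b c + 2 * h a b c)" "rho p = 0" "h \<in> Zloc2_fps3"
      by blast
    have "fps_nth (rho p) 45 = 0" using ph(2) by simp
    then have p0: "p 2 1 0 = 0" unfolding rho45 by simp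
    have "(1::rat) = p 2 1 0 + 2 * h 2 1 0" using phi210[where 'a=rat] ph(1) by metis
    then have "h 2 1 0 = 1/2" using p0 by simp
    moreover have "h 2 1 0 \<in> Zloc2" using ph(3) unfolding Zloc2_fps3_def by blast
    ultimately show False using half_not_Zloc2 by metis
  qed
  have rphi: "rho (phi :: bit fps3) = 0"
    by (rule fps_ext) (simp add: rho_phi_nth)
  have "(phi :: bit fps3) \<notin> {(\<lambda>a b c. red2 (p a b c)) | p. p \<in> Zloc2_fps3 \<and> rho p = 0}"
  proof
    assume "(phi :: bit fps3) \<in> {(\<lambda>a b c. red2 (p a b c)) | p. p \<in> Zloc2_fps3 \<and> rho p = 0}"
    then obtain p :: "rat fps3" where pp: "phi = (\<lambda>a b c. red2 (p a b c))" "rho p = 0" by blast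
    have "fps_nth (rho p) 45 = 0" using pp(2) by simp
    then have p0: "p 2 1 0 = 0" unfolding rho45 by simp
    have "(1::bit) = red2 (p 2 1 0)" using phi210[where 'a=bit] pp(1) by metis
    also have "\<dots> = 0" unfolding p0 red2_def by simp
    finally show False by simp
  qed
  then show "\<not> ({f :: bit fps3. rho f = 0} \<subseteq>
              {(\<lambda>a b c. red2 (p a b c)) | p. p \<in> Zloc2_fps3 \<and> rho p = 0})"
    using rphi by blast
qed

end
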